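(* Let $T$ be an almost reduced linear trellis of length $n$, let $i\in\mathbb{Z}_n$ and $v,w\in V_i(T)$. If there exists a directed path in $T$ from $v$ to $w$, then there exists a directed path from $v$ to $w$ of length exactly $n$. In particular, if $T$ is connected and almost reduced, then for all $v,w\in V_0(T)$ there are paths of length $n$ from $v$ to $w$ and from $w$ to $v$.
   Context: Let $\mathbb{F}$ be a finite field and $n\ge1$; indices are taken in $\mathbb{Z}_n$. A trellis $T$ of length $n$ over $\mathbb{F}$ consists of pairwise disjoint finite vertex sets $V_i(T)$, $i\in\mathbb{Z}_n$, and edge sets $E_i(T)\subseteq V_i(T)\times\mathbb{F}\times V_{i+1}(T)$; $(v,\alpha,w)\in E_i(T)$ is an edge from $v$ to $w$. Trellises are trim. $T$ is linear if each $V_i(T)$ is an $\mathbb{F}$-vector space and each $E_i(T)$ a subspace. A path of length $m$ is $v_0\alpha_0v_1\cdots\alpha_{m-1}v_m$ with each $(v_j,\alpha_j,v_{j+1})$ an edge. A cycle is a closed path of length $n$ starting in $V_0(T)$; $T$ is almost reduced if every vertex lies on some cycle (equivalently, every vertex lies on a closed path of length $n$); connected if for any two distinct vertices $v,w$ there is a directed path from $v$ to $w$. *)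

theory Defs
  imports Complex_Main
begin

text \<open>A trellis of length n: vertices are pairs (i, x) with i < n and x in V i
  (so the vertex sets are pairwise disjoint by construction); the edge set E i
  consists of triples (x, a, y) with x in V i and y in V ((i+1) mod n).\<close>

definition is_edge :: "nat \<Rightarrow> (nat \<Rightarrow> ('v \<times> 'f \<times> 'v) set) \<Rightarrow> nat \<times> 'v \<Rightarrow> 'f \<Rightarrow> nat \<times> 'v \<Rightarrow> bool" where
  "is_edge n E p a q \<longleftrightarrow> fst p < n \<and> fst q = Suc (fst p) mod n \<and> (snd p, a, snd q) \<in> E (fst p)"

definition is_path :: "nat \<Rightarrow> (nat \<Rightarrow> ('v \<times> 'f \<times> 'v) set) \<Rightarrow> (nat \<times> 'v) list \<Rightarrow> 'f list \<Rightarrow> bool" where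
  "is_path n E vs as \<longleftrightarrow> length vs = Suc (length as) \<and>
     (\<forall>j < length as. is_edge n E (vs ! j) (as ! j) (vs ! Suc j))"

definition path_of_length :: "nat \<Rightarrow> (nat \<Rightarrow> ('v \<times> 'f \<times> 'v) set) \<Rightarrow> nat \<Rightarrow> nat \<times> 'v \<Rightarrow> nat \<times> 'v \<Rightarrow> bool" where
  "path_of_length n E m p q \<longleftrightarrow> (\<exists>vs as. is_path n E vs as \<and> length as = m \<and> hd vs = p \<and> last vs = q)"

definition has_path :: "nat \<Rightarrow> (nat \<Rightarrow> ('v \<times> 'f \<times> 'v) set) \<Rightarrow> nat \<times> 'v \<Rightarrow> nat \<times> 'v \<Rightarrow> bool" where
  "has_path n E p q \<longleftrightarrow> (\<exists>m. path_of_length n E m p q)"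

definition is_vertex :: "nat \<Rightarrow> (nat \<Rightarrow> 'v set) \<Rightarrow> nat \<times> 'v \<Rightarrow> bool" where
  "is_vertex n V p \<longleftrightarrow> fst p < n \<and> snd p \<in> V (fst p)"

definition trellis :: "nat \<Rightarrow> (nat \<Rightarrow> 'v set) \<Rightarrow> (nat \<Rightarrow> ('v \<times> 'f \<times> 'v) set) \<Rightarrow> bool" where
  "trellis n V E \<longleftrightarrow> n \<ge> 1 \<and>
     (\<forall>i < n. finite (V i) \<and> E i \<subseteq> V i \<times> UNIV \<times> V (Suc i mod n)) \<and>
     (\<forall>p. is_vertex n V p \<longrightarrow> (\<exists>a q. is_edge n E p a q) \<and> (\<exists>a q. is_edge n E q a p))"

definition linear_trellis :: "('f::field \<Rightarrow> 'v::ab_group_add \<Rightarrow> 'v) \<Rightarrow> nat \<Rightarrow> (nat \<Rightarrow> 'v set) \<Rightarrow> (nat \<Rightarrow> ('v \<times> 'f \<times> 'v) set) \<Rightarrow> bool" where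
  "linear_trellis scale n V E \<longleftrightarrow> trellis n V E \<and> vector_space scale \<and>
     (\<forall>i < n. module.subspace scale (V i) \<and>
        (0, 0, 0) \<in> E i \<and>
        (\<forall>x a y x' a' y'. (x, a, y) \<in> E i \<longrightarrow> (x', a', y') \<in> E i \<longrightarrow> (x + x', a + a', y + y') \<in> E i) \<and>
        (\<forall>c x a y. (x, a, y) \<in> E i \<longrightarrow> (scale c x, c * a, scale c y) \<in> E i))"

definition is_cycle :: "nat \<Rightarrow> (nat \<Rightarrow> ('v \<times> 'f \<times> 'v) set) \<Rightarrow> (nat \<times> 'v) list \<Rightarrow> 'f list \<Rightarrow> bool" where
  "is_cycle n E vs as \<longleftrightarrow> is_path n E vs as \<and> length as = n \<and> fst (hd vs) = 0 \<and> hd vs = last vs"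

definition almost_reduced :: "nat \<Rightarrow> (nat \<Rightarrow> 'v set) \<Rightarrow> (nat \<Rightarrow> ('v \<times> 'f \<times> 'v) set) \<Rightarrow> bool" where
  "almost_reduced n V E \<longleftrightarrow> (\<forall>p. is_vertex n V p \<longrightarrow> (\<exists>vs as. is_cycle n E vs as \<and> p \<in> set vs))"

definition connected_trellis :: "nat \<Rightarrow> (nat \<Rightarrow> 'v set) \<Rightarrow> (nat \<Rightarrow> ('v \<times> 'f \<times> 'v) set) \<Rightarrow> bool" where
  "connected_trellis n V E \<longleftrightarrow> (\<forall>p q. is_vertex n V p \<longrightarrow> is_vertex n V q \<longrightarrow> p \<noteq> q \<longrightarrow> has_path n E p q)"

end

theory Submission
  imports Defs
begin

lemma path_fst:
  assumes "is_path n E vs as" "fst (hd vs) < n" "j \<le> length as"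
  shows "fst (vs ! j) = (fst (hd vs) + j) mod n"
  using assms(3)
proof (induction j)
  case 0
  have "vs \<noteq> []" using assms(1) unfolding is_path_def by auto
  then show ?case using assms(2) by (simp add: hd_conv_nth)
next
  case (Suc j)
  then have "is_edge n E (vs ! j) (as ! j) (vs ! Suc j)" using assms(1) unfolding is_path_def by auto
  then have "fst (vs ! Suc j) = Suc (fst (vs ! j)) mod n" unfolding is_edge_def by auto
  with Suc show ?case by (simp add: mod_Suc_eq)
qed

lemma split_at:
  assumes "is_path n E vs as" "t \<le> length as"
  shows "path_of_length n E t (hd vs) (vs ! t) \<and> path_of_length n E (length as - t) (vs ! t) (last vs)"
proof -
  have L: "length vs = Suc (length as)" using assms(1) unfolding is_path_def by auto
  have E: "\<forall>j < length as. is_edge n E (vs ! j) (as ! j) (vs ! Suc j)" using assms(1) unfolding is_path_def by auto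
  have "is_path n E (take (Suc t) vs) (take t as)"
    unfolding is_path_def using L E assms(2) by auto
  moreover have "hd (take (Suc t) vs) = hd vs" using L by (simp add: hd_conv_nth)
  moreover have "last (take (Suc t) vs) = vs ! t"
  proof -
    have "take (Suc t) vs \<noteq> []" "length (take (Suc t) vs) = Suc t" using L assms(2) by auto
    then show ?thesis by (simp add: last_conv_nth)
  qed
  moreover have "is_path n E (drop t vs) (drop t as)"
    unfolding is_path_def using L E assms(2) by auto
  moreover have "hd (drop t vs) = vs ! t" using L assms(2) by (simp add: hd_drop_conv_nth)
  moreover have "last (drop t vs) = last vs" using L assms(2) by simp
  moreover have "length (take t as) = t" "length (drop t as) = length as - t" using assms(2) by auto
  ultimately show ?thesis unfolding path_of_length_def by blast
qed

lemma pol_split: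
  assumes "path_of_length n E (m + k) p r"
  shows "\<exists>q. path_of_length n E m p q \<and> path_of_length n E k q r"
proof -
  obtain vs as where h: "is_path n E vs as" "length as = m + k" "hd vs = p" "last vs = r"
    using assms unfolding path_of_length_def by auto
  have "m \<le> length as" using h by simp
  from split_at[OF h(1) this] h show ?thesis by (metis add_diff_cancel_left')
qed

lemma pol_zero:
  assumes "path_of_length n E 0 p q" shows "p = q"
proof -
  obtain vs as where h: "is_path n E vs as" "length as = 0" "hd vs = p" "last vs = q"
    using assms unfolding path_of_length_def by auto
  then have "length vs = 1" unfolding is_path_def by simp
  then obtain a where "vs = [a]" by (cases vs) auto
  then show ?thesis using h by simp
qed

lemma pol_fst:
  assumes "path_of_length n E m p q" "fst p < n"
  shows "fst q = (fst p + m) mod n"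
proof -
  obtain vs as where h: "is_path n E vs as" "length as = m" "hd vs = p" "last vs = q"
    using assms(1) unfolding path_of_length_def by auto
  have "vs \<noteq> []" "length vs = Suc m" using h unfolding is_path_def by auto
  then have "last vs = vs ! m" by (simp add: last_conv_nth)
  then show ?thesis using path_fst[OF h(1)] h assms(2) by auto
qed

lemma nth_concat_path:
  assumes "length vs = Suc a" "last vs = hd ws" "ws \<noteq> []" "k < length ws"
  shows "(vs @ tl ws) ! (a + k) = ws ! k"
proof (cases k)
  case 0
  have "vs \<noteq> []" using assms(1) by auto
  then have "(vs @ tl ws) ! a = vs ! a" using assms(1) by (simp add: nth_append)
  also have "\<dots> = last vs" using assms(1) \<open>vs \<noteq> []\<close> by (simp add: last_conv_nth)
  also have "\<dots> = ws ! 0" using assms(2,3) by (simp add: hd_conv_nth)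
  finally show ?thesis using 0 by simp
next
  case (Suc k')
  then show ?thesis using assms by (simp add: nth_append nth_tl)
qed

lemma pol_append:
  assumes "path_of_length n E m p q" "path_of_length n E k q r"
  shows "path_of_length n E (m + k) p r"
proof -
  obtain vs as where h: "is_path n E vs as" "length as = m" "hd vs = p" "last vs = q"
    using assms(1) unfolding path_of_length_def by auto
  obtain ws bs where g: "is_path n E ws bs" "length bs = k" "hd ws = q" "last ws = r"
    using assms(2) unfolding path_of_length_def by auto
  have L: "length vs = Suc m" "length ws = Suc k" using h g unfolding is_path_def by auto
  have EV: "\<forall>j < m. is_edge n E (vs ! j) (as ! j) (vs ! Suc j)" using h unfolding is_path_def by auto
  have EW: "\<forall>j < k. is_edge n E (ws ! j) (bs ! j) (ws ! Suc j)" using g unfolding is_path_def by auto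
  have N: "\<And>j. j \<le> k \<Longrightarrow> (vs @ tl ws) ! (m + j) = ws ! j"
  proof -
    fix j assume "j \<le> k"
    show "(vs @ tl ws) ! (m + j) = ws ! j"
    proof -
      have "ws \<noteq> []" using L by auto
      then show ?thesis using nth_concat_path[of vs m ws j] L h g \<open>j \<le> k\<close> by auto
    qed
  qed
  have "is_path n E (vs @ tl ws) (as @ bs)"
    unfolding is_path_def
  proof (intro conjI allI impI)
    show "length (vs @ tl ws) = Suc (length (as @ bs))" using L h g by auto
  next
    fix j assume j: "j < length (as @ bs)"
    show "is_edge n E ((vs @ tl ws) ! j) ((as @ bs) ! j) ((vs @ tl ws) ! Suc j)"
    proof (cases "j < m")
      case True
      then show ?thesis using EV L h by (simp add: nth_append)
    next
      case False
      define t where "t = j - m"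
      have j': "j = m + t" "t < k" using False j t_def h g by auto
      have "(vs @ tl ws) ! j = ws ! t" using N j' by auto
      moreover have "(vs @ tl ws) ! Suc j = ws ! Suc t" using N[of "Suc t"] j' by auto
      moreover have "(as @ bs) ! j = bs ! t" using j' h by (simp add: nth_append)
      ultimately show ?thesis using EW j' by auto
    qed
  qed
  moreover have "hd (vs @ tl ws) = p" using L h by (cases vs) auto
  moreover have "last (vs @ tl ws) = r"
  proof -
    have "ws \<noteq> []" using L by auto
    then have "ws ! k = r" using L g by (simp add: last_conv_nth)
    then have "(vs @ tl ws) ! (m + k) = r" using N[of k] by simp
    moreover have "length (vs @ tl ws) = Suc (m + k)" using L by auto
    ultimately show ?thesis by (metis last_conv_nth diff_Suc_1 nat.distinct(1) length_0_conv)
  qed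
  moreover have "length (as @ bs) = m + k" using h g by simp
  ultimately show ?thesis unfolding path_of_length_def by blast
qed

lemma pol_add:
  assumes lin: "linear_trellis scale n V E"
    and "path_of_length n E m (i, x) (j, y)" "path_of_length n E m (i, x') (j, y')" "i < n"
  shows "path_of_length n E m (i, x + x') (j, y + y')"
proof -
  obtain vs as where h: "is_path n E vs as" "length as = m" "hd vs = (i,x)" "last vs = (j,y)"
    using assms(2) unfolding path_of_length_def by auto
  obtain ws bs where g: "is_path n E ws bs" "length bs = m" "hd ws = (i,x')" "last ws = (j,y')"
    using assms(3) unfolding path_of_length_def by auto
  have L: "length vs = Suc m" "length ws = Suc m" using h g unfolding is_path_def by auto
  have F: "\<And>t. t \<le> m \<Longrightarrow> fst (vs ! t) = fst (ws ! t)"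
    using path_fst[OF h(1)] path_fst[OF g(1)] h g assms(4) by auto
  define us where "us = map2 (\<lambda>p q. (fst p, snd p + snd q)) vs ws"
  define cs where "cs = map2 (+) as bs"
  have LU: "length us = Suc m" "length cs = m" using L h g unfolding us_def cs_def by auto
  have U: "\<And>t. t \<le> m \<Longrightarrow> us ! t = (fst (vs ! t), snd (vs ! t) + snd (ws ! t))"
    using L unfolding us_def by auto
  have "is_path n E us cs" unfolding is_path_def
  proof (intro conjI allI impI)
    show "length us = Suc (length cs)" using LU by simp
  next
    fix t assume t: "t < length cs"
    then have t': "t < m" using LU by simp
    have e1: "is_edge n E (vs ! t) (as ! t) (vs ! Suc t)" using h t' unfolding is_path_def by auto
    have e2: "is_edge n E (ws ! t) (bs ! t) (ws ! Suc t)" using g t' unfolding is_path_def by auto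
    have f1: "fst (vs ! t) = fst (ws ! t)" "fst (vs ! Suc t) = fst (ws ! Suc t)" using F t' by auto
    have lt: "fst (vs ! t) < n" using e1 unfolding is_edge_def by auto
    have "(snd (vs ! t) + snd (ws ! t), as ! t + bs ! t, snd (vs ! Suc t) + snd (ws ! Suc t)) \<in> E (fst (vs ! t))"
      using lin lt e1 e2 f1 unfolding linear_trellis_def is_edge_def by auto
    then show "is_edge n E (us ! t) (cs ! t) (us ! Suc t)"
      using U[of t] U[of "Suc t"] t' e1 h g unfolding is_edge_def cs_def by auto
  qed
  moreover have "hd us = (i, x + x')"
  proof -
    have "us \<noteq> []" "vs \<noteq> []" "ws \<noteq> []" using LU L by auto
    then show ?thesis using U[of 0] h g by (simp add: hd_conv_nth)
  qed
  moreover have "last us = (j, y + y')"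
  proof -
    have "us \<noteq> []" "vs \<noteq> []" "ws \<noteq> []" using LU L by auto
    then have "last us = us ! m" "last vs = vs ! m" "last ws = ws ! m" using LU L by (auto simp add: last_conv_nth)
    then show ?thesis using U[of m] h g by (metis fst_conv snd_conv order_refl)
  qed
  ultimately show ?thesis unfolding path_of_length_def using LU by auto
qed

lemma pol_scale:
  assumes lin: "linear_trellis scale n V E"
    and "path_of_length n E m (i, x) (j, y)"
  shows "path_of_length n E m (i, scale c x) (j, scale c y)"
proof -
  obtain vs as where h: "is_path n E vs as" "length as = m" "hd vs = (i,x)" "last vs = (j,y)"
    using assms(2) unfolding path_of_length_def by auto
  have L: "length vs = Suc m" using h unfolding is_path_def by auto
  define us where "us = map (\<lambda>p. (fst p, scale c (snd p))) vs"
  define cs where "cs = map ((*) c) as"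
  have "is_path n E us cs" unfolding is_path_def
  proof (intro conjI allI impI)
    show "length us = Suc (length cs)" using L h unfolding us_def cs_def by simp
  next
    fix t assume t: "t < length cs"
    then have t': "t < m" using h unfolding cs_def by simp
    have e1: "is_edge n E (vs ! t) (as ! t) (vs ! Suc t)" using h t' unfolding is_path_def by auto
    have lt: "fst (vs ! t) < n" using e1 unfolding is_edge_def by auto
    have "(scale c (snd (vs ! t)), c * as ! t, scale c (snd (vs ! Suc t))) \<in> E (fst (vs ! t))"
      using lin lt e1 unfolding linear_trellis_def is_edge_def by auto
    then show "is_edge n E (us ! t) (cs ! t) (us ! Suc t)"
      using t' e1 h L unfolding is_edge_def cs_def us_def by auto
  qed
  moreover have "hd us = (i, scale c x)" using h L unfolding us_def by (cases vs) auto
  moreover have "last us = (j, scale c y)"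
  proof -
    have "vs \<noteq> []" using L by auto
    then show ?thesis using h unfolding us_def by (simp add: last_map)
  qed
  moreover have "length cs = m" using h unfolding cs_def by simp
  ultimately show ?thesis unfolding path_of_length_def by blast
qed

lemma diag:
  assumes "almost_reduced n V E" "is_vertex n V p"
  shows "path_of_length n E n p p"
proof -
  obtain vs as where c: "is_cycle n E vs as" "p \<in> set vs"
    using assms unfolding almost_reduced_def by blast
  have P: "is_path n E vs as" "length as = n" "hd vs = last vs"
    using c unfolding is_cycle_def by auto
  have L: "length vs = Suc n" using P unfolding is_path_def by auto
  obtain t where t: "t < length vs" "vs ! t = p" using c(2) by (metis in_set_conv_nth)
  then have "t \<le> n" using L by simp
  from split_at[OF P(1), of t] this P
  have "path_of_length n E t (hd vs) p" "path_of_length n E (n - t) p (last vs)" using t by auto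
  then have a: "path_of_length n E (n - t) p (hd vs)" "path_of_length n E t (hd vs) p" using P(3) by auto
  have "path_of_length n E ((n - t) + t) p p" using pol_append[OF a(1) a(2)] .
  then show ?thesis using \<open>t \<le> n\<close> by simp
qed

lemma pol_vertex:
  assumes "trellis n V E" "path_of_length n E (Suc m) p q"
  shows "is_vertex n V q"
proof -
  obtain r where "path_of_length n E 1 r q" using pol_split[of n E m 1 p q] assms(2) by auto
  then obtain vs as where h: "is_path n E vs as" "length as = 1" "hd vs = r" "last vs = q"
    unfolding path_of_length_def by auto
  have "length vs = 2" using h unfolding is_path_def by auto
  then have "vs \<noteq> []" by auto
  with \<open>length vs = 2\<close> have "last vs = vs ! 1" by (simp add: last_conv_nth)
  moreover have e: "is_edge n E (vs ! 0) (as ! 0) (vs ! 1)" using h unfolding is_path_def by auto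
  ultimately have e': "is_edge n E (vs ! 0) (as ! 0) q" using h by simp
  have n1: "n \<ge> 1" using assms(1) unfolding trellis_def by auto
  have lt: "fst (vs ! 0) < n" using e' unfolding is_edge_def by auto
  then have "E (fst (vs ! 0)) \<subseteq> V (fst (vs ! 0)) \<times> UNIV \<times> V (Suc (fst (vs ! 0)) mod n)"
    using assms(1) unfolding trellis_def by auto
  then show ?thesis using e' n1 unfolding is_vertex_def is_edge_def by auto
qed

lemma trans_n:
  assumes lin: "linear_trellis scale n V E" and ar: "almost_reduced n V E"
    and "path_of_length n E n (i, x) (i, z)" "path_of_length n E n (i, z) (i, y)" "i < n" "z \<in> V i"
  shows "path_of_length n E n (i, x) (i, y)"
proof -
  have vs: "vector_space scale" using lin unfolding linear_trellis_def by auto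
  then have md: "module scale" by (simp add: module_iff_vector_space)
  have d: "path_of_length n E n (i, z) (i, z)" using diag[OF ar] assms unfolding is_vertex_def by auto
  have d': "path_of_length n E n (i, - z) (i, - z)"
    using pol_scale[OF lin d, of "-1"] module.scale_minus_left[OF md] module.scale_one[OF md] by simp
  have "path_of_length n E n (i, x + z) (i, z + y)" using pol_add[OF lin assms(3) assms(4) assms(5)] .
  from pol_add[OF lin this d' assms(5)] show ?thesis by simp
qed

lemma main_part:
  assumes lin: "linear_trellis scale n V E" and ar: "almost_reduced n V E"
    and i: "i < n" and y: "y \<in> V i"
  shows "path_of_length n E (k * n) (i, x) (i, y) \<Longrightarrow> path_of_length n E n (i, x) (i, y)"
proof (induction k arbitrary: x)
  case 0
  then have "x = y" using pol_zero by fastforce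
  then show ?case using diag[OF ar] i y unfolding is_vertex_def by auto
next
  case (Suc k)
  have tr: "trellis n V E" using lin unfolding linear_trellis_def by auto
  have n1: "n \<ge> 1" using tr unfolding trellis_def by auto
  obtain q where q: "path_of_length n E n (i, x) q" "path_of_length n E (k * n) q (i, y)"
    using pol_split[of n E n "k * n" "(i, x)" "(i, y)"] Suc.prems by (auto simp del: prod.collapse)
  have "fst q = (i + n) mod n" using pol_fst[OF q(1)] i by simp
  then have fq: "fst q = i" using i by simp
  obtain z where qz: "q = (i, z)" using fq by (metis prod.collapse)
  have "is_vertex n V q" using pol_vertex[OF tr, of "n - 1"] q(1) n1 by simp
  then have zV: "z \<in> V i" using qz unfolding is_vertex_def by auto
  show ?case
  proof (cases k)
    case 0
    then have "q = (i, y)" using q(2) pol_zero by fastforce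
    then show ?thesis using q(1) by simp
  next
    case (Suc k')
    have "path_of_length n E n (i, z) (i, y)" using Suc.IH q(2) qz by simp
    then show ?thesis using trans_n[OF lin ar] q(1) qz i zV by blast
  qed
qed

theorem mainTheorem18:
  fixes scale :: "'f::{field,finite} \<Rightarrow> 'v::ab_group_add \<Rightarrow> 'v"
    and n :: nat and V :: "nat \<Rightarrow> 'v set" and E :: "nat \<Rightarrow> ('v \<times> 'f \<times> 'v) set"
  assumes "linear_trellis scale n V E"
    and "almost_reduced n V E"
  shows "(\<forall>i < n. \<forall>x \<in> V i. \<forall>y \<in> V i.
            has_path n E (i, x) (i, y) \<longrightarrow> path_of_length n E n (i, x) (i, y))
       \<and> (connected_trellis n V E \<longrightarrow>
            (\<forall>x \<in> V 0. \<forall>y \<in> V 0. path_of_length n E n (0, x) (0, y) \<and> path_of_length n E n (0, y) (0, x)))"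
proof -
  have n1: "n \<ge> 1" using assms(1) unfolding linear_trellis_def trellis_def by auto
  have A: "\<forall>i < n. \<forall>x \<in> V i. \<forall>y \<in> V i.
            has_path n E (i, x) (i, y) \<longrightarrow> path_of_length n E n (i, x) (i, y)"
  proof (intro allI impI ballI)
    fix i x y assume i: "i < n" and x: "x \<in> V i" and y: "y \<in> V i" and hp: "has_path n E (i, x) (i, y)"
    obtain m where m: "path_of_length n E m (i, x) (i, y)" using hp unfolding has_path_def by auto
    have "i = (i + m) mod n" using pol_fst[OF m] i by simp
    have r: "m mod n < n" using n1 by simp
    have e: "(i + m mod n) mod n = i" using \<open>i = (i + m) mod n\<close> by (simp add: mod_add_right_eq)
    have "m mod n = 0"
    proof (cases "i + m mod n < n")
      case True
      then show ?thesis using e by simp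
    next
      case False
      then have "(i + m mod n) mod n = (i + m mod n - n) mod n" by (simp add: le_mod_geq)
      also have "\<dots> = i + m mod n - n" using i r by (intro mod_less) linarith
      finally show ?thesis using e False r by simp
    qed
    then obtain k where "m = k * n" by (metis mod_eq_0_iff_dvd dvd_def mult.commute)
    then show "path_of_length n E n (i, x) (i, y)" using main_part[OF assms i y] m by simp
  qed
  moreover have "connected_trellis n V E \<longrightarrow>
            (\<forall>x \<in> V 0. \<forall>y \<in> V 0. path_of_length n E n (0, x) (0, y) \<and> path_of_length n E n (0, y) (0, x))"
  proof (intro impI ballI)
    fix x y assume c: "connected_trellis n V E" and x: "x \<in> V 0" and y: "y \<in> V 0"
    have g: "\<And>a b. a \<in> V 0 \<Longrightarrow> b \<in> V 0 \<Longrightarrow> path_of_length n E n (0, a) (0, b)"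
    proof -
      fix a b assume a: "a \<in> V 0" and b: "b \<in> V 0"
      show "path_of_length n E n (0, a) (0, b)"
      proof (cases "a = b")
        case True
        then show ?thesis using diag[OF assms(2)] a n1 unfolding is_vertex_def by auto
      next
        case False
        then have "has_path n E (0, a) (0, b)" using c a b n1 unfolding connected_trellis_def is_vertex_def by auto
        then show ?thesis using A a b n1 by auto
      qed
    qed
    show "path_of_length n E n (0, x) (0, y) \<and> path_of_length n E n (0, y) (0, x)" using g x y by auto
  qed
  ultimately show ?thesis by blast
qed

end
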